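(* Any naturally ordered compact Hausdorff topological semiring $R$ is bounded, i.e., the partially ordered set $(R,\le)$ has a greatest element.
   Context: A semiring is an algebra $(R,+,\cdot,0)$ such that $(R,+,0)$ is a commutative monoid, $(R,\cdot)$ is a semigroup (no multiplicative identity is required), multiplication distributes over addition on both sides, and $0\cdot x = x\cdot 0 = 0$ for all $x\in R$. A topological semiring is a semiring with a topology in which addition and multiplication are continuous. On $R$ define $x\le y$ iff there is $z\in R$ with $x+z=y$; $R$ is naturally ordered if this preorder is antisymmetric. *)

theory Defs
  imports "HOL-Analysis.Analysis"
begin

definition nat_le :: "'a::semiring_0 \<Rightarrow> 'a \<Rightarrow> bool" where
  "nat_le x y \<longleftrightarrow> (\<exists>z. x + z = y)"

definition naturally_ordered :: "'a::semiring_0 itself \<Rightarrow> bool" where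
  "naturally_ordered _ \<longleftrightarrow> (\<forall>x y::'a. nat_le x y \<and> nat_le y x \<longrightarrow> x = y)"

definition topological_semiring :: "'a::{semiring_0, topological_space} itself \<Rightarrow> bool" where
  "topological_semiring _ \<longleftrightarrow>
     continuous_on (UNIV :: ('a \<times> 'a) set) (\<lambda>p. fst p + snd p) \<and>
     continuous_on (UNIV :: ('a \<times> 'a) set) (\<lambda>p. fst p * snd p)"

end

theory Submission
  imports Defs
begin

theorem corollary3p5:
  assumes "topological_semiring TYPE('a::{semiring_0, t2_space})"
    and "compact (UNIV :: 'a set)"
    and "naturally_ordered TYPE('a)"
  shows "\<exists>t::'a. \<forall>x. nat_le x t"
proof -
  have cadd: "continuous_on (UNIV :: ('a \<times> 'a) set) (\<lambda>p. fst p + snd p)"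
    using assms(1) unfolding topological_semiring_def by blast
  have cl: "closed (range (\<lambda>y. x + y))" for x :: 'a
  proof -
    have "continuous_on UNIV (\<lambda>y::'a. x + y)"
    proof -
      have "continuous_on UNIV (\<lambda>y::'a. (x, y))"
        by (intro continuous_intros)
      from continuous_on_compose[OF this continuous_on_subset[OF cadd]]
      show ?thesis by (simp add: o_def)
    qed
    then have "compact (range (\<lambda>y. x + y))"
      using assms(2) compact_continuous_image by blast
    then show ?thesis by (rule compact_imp_closed)
  qed
  define F where "F = (\<lambda>x::'a. range (\<lambda>y. x + y)) ` UNIV"
  have "(UNIV::'a set) \<inter> \<Inter>F \<noteq> {}"
  proof (rule compact_imp_fip[OF assms(2)])
    show "closed t" if "t \<in> F" for t using that cl F_def by auto
  next
    fix F' assume fin: "finite F'" and sub: "F' \<subseteq> F"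
    then obtain X where X: "finite X" "F' = (\<lambda>x::'a. range (\<lambda>y. x + y)) ` X"
      unfolding F_def by (meson finite_subset_image)
    have "sum id X \<in> \<Inter>F'"
    proof -
      have "sum id X \<in> range (\<lambda>y. x + y)" if "x \<in> X" for x
        using sum.remove[OF X(1) that, of id] by auto
      then show ?thesis using X by auto
    qed
    then show "UNIV \<inter> \<Inter>F' \<noteq> {}" by blast
  qed
  then obtain t where "t \<in> \<Inter>F" by blast
  then have "\<forall>x. nat_le x t" unfolding F_def nat_le_def by force
  then show ?thesis by blast
qed

end
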